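(* Let $(\mathcal L_n)_{n\ge1}$ be a sequence of random elements of $\mathcal P_1(\mathbb R)$ and let $(\mathbb L_n)_{n\ge1}$ be a uniformly integrable sequence of deterministic elements of $\mathcal P_1(\mathbb R)$. Assume that for every $f:\mathbb R\to\mathbb R$ with $|f(x)-f(y)|\le|x-y|$ for all $x,y$, $$\Big|\int_{\mathbb R}f\,d\mathcal L_n-\int_{\mathbb R}f\,d\mathbb L_n\Big|\to0\quad\text{in probability as }n\to\infty.$$ Then $\mathcal W(\mathcal L_n,\mathbb L_n)\to0$ in probability.
   Context: $\mathcal P_1(\mathbb R)$ is the space of Borel probability measures on $\mathbb R$ with finite first absolute moment, equipped with the $1$-Wasserstein distance $\mathcal W(\mathcal L_1,\mathcal L_2)=\sup_f|\int f\,d\mathcal L_1-\int f\,d\mathcal L_2|$, the supremum over all $1$-Lipschitz $f:\mathbb R\to\mathbb R$. A sequence $(\mathbb L_n)$ in $\mathcal P_1(\mathbb R)$ is uniformly integrable if $\lim_{K\to\infty}\sup_n\int_{|x|>K}|x|\,d\mathbb L_n(x)=0$. *)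

theory Defs
  imports "HOL-Probability.Probability"
begin

definition P1 :: "real measure \<Rightarrow> bool" where
  "P1 \<mu> \<longleftrightarrow> prob_space \<mu> \<and> sets \<mu> = sets borel \<and> integrable \<mu> (\<lambda>x. \<bar>x\<bar>)"

text \<open>1-Wasserstein distance (Kantorovich-Rubinstein dual form).\<close>
definition W1 :: "real measure \<Rightarrow> real measure \<Rightarrow> real" where
  "W1 \<mu> \<nu> = (SUP f \<in> {f :: real \<Rightarrow> real. 1-lipschitz_on UNIV f}.
                 \<bar>(\<integral>x. f x \<partial>\<mu>) - (\<integral>x. f x \<partial>\<nu>)\<bar>)"

definition unif_integrable :: "(nat \<Rightarrow> real measure) \<Rightarrow> bool" where
  "unif_integrable LL \<longleftrightarrow>
     (\<forall>e>0. \<exists>K. \<forall>n. (LINT x:{x. K < \<bar>x\<bar>}|LL n. \<bar>x\<bar>) \<le> e)"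

definition conv_in_prob_zero :: "'a measure \<Rightarrow> (nat \<Rightarrow> 'a \<Rightarrow> real) \<Rightarrow> bool" where
  "conv_in_prob_zero M X \<longleftrightarrow>
     (\<forall>n. X n \<in> borel_measurable M) \<and>
     (\<forall>e>0. (\<lambda>n. measure M {\<omega> \<in> space M. e < \<bar>X n \<omega>\<bar>}) \<longlonglongrightarrow> 0)"

end

theory Submission
  imports Defs
begin


definition ramp :: "real \<Rightarrow> real \<Rightarrow> real \<Rightarrow> real" where
  "ramp a d x = min d (max 0 (x - a))"

definition gfun :: "nat \<Rightarrow> (nat \<Rightarrow> real) \<Rightarrow> real \<Rightarrow> real" where
  "gfun n s x = (\<Sum>k<2*n*n. s k * ramp (- real n + real k * (1 / real n)) (1 / real n) x)"

lemma minmax_aux: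
  fixes e d u :: real assumes "0 \<le> e" "0 \<le> d"
  shows "min e (max 0 (x - a)) + min d (max 0 (x - (a + e))) = min (e + d) (max 0 (x - a))"
  using assms unfolding min_def max_def by auto

lemma ramp_sum:
  fixes a d x :: real assumes "0 \<le> d"
  shows "(\<Sum>j<N. ramp (a + real j * d) d x) = min (real N * d) (max 0 (x - a))"
proof (induction N)
  case 0 then show ?case using assms by (simp add: min_def max_def)
next
  case (Suc N)
  have "(\<Sum>j<Suc N. ramp (a + real j * d) d x) = min (real N * d) (max 0 (x - a)) + min d (max 0 (x - (a + real N * d)))"
    using Suc by (simp add: ramp_def)
  also have "\<dots> = min (real (Suc N) * d) (max 0 (x - a))"
  proof -
    have e: "0 \<le> real N * d" using assms by simp
    have "real (Suc N) * d = real N * d + d" by (simp add: algebra_simps)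
    then show ?thesis using minmax_aux[OF e assms] by simp
  qed
  finally show ?case .
qed

lemma ramp_mono: "0 \<le> d \<Longrightarrow> x \<le> y \<Longrightarrow> ramp a d x \<le> ramp a d y"
  by (auto simp: ramp_def min_def max_def)

lemma gfun_lip_aux:
  assumes "n > 0" "\<And>k. k < 2*n*n \<Longrightarrow> \<bar>s k\<bar> \<le> 1" "x \<le> y"
  shows "\<bar>gfun n s y - gfun n s x\<bar> \<le> y - x"
proof -
  define d :: real where "d = 1 / real n"
  define a :: real where "a = - real n"
  have d0: "0 \<le> d" by (simp add: d_def)
  let ?r = "\<lambda>k z. ramp (a + real k * d) d z"
  have "\<bar>gfun n s y - gfun n s x\<bar> = \<bar>\<Sum>k<2*n*n. s k * (?r k y - ?r k x)\<bar>"
    unfolding gfun_def a_def d_def by (simp add: sum_subtractf[symmetric] algebra_simps)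
  also have "\<dots> \<le> (\<Sum>k<2*n*n. \<bar>s k * (?r k y - ?r k x)\<bar>)" by (rule sum_abs)
  also have "\<dots> \<le> (\<Sum>k<2*n*n. (?r k y - ?r k x))"
  proof (rule sum_mono)
    fix k assume "k \<in> {..<2*n*n}"
    then have "\<bar>s k\<bar> \<le> 1" using assms(2) by auto
    moreover have "0 \<le> ?r k y - ?r k x" using ramp_mono[OF d0 assms(3)] by simp
    ultimately show "\<bar>s k * (?r k y - ?r k x)\<bar> \<le> ?r k y - ?r k x"
      by (simp add: abs_mult mult_left_le_one_le)
  qed
  also have "\<dots> = min (real (2*n*n) * d) (max 0 (y - a)) - min (real (2*n*n) * d) (max 0 (x - a))"
    by (simp add: sum_subtractf ramp_sum[OF d0])
  also have "\<dots> \<le> y - x" using assms(3) by (auto simp: min_def max_def)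
  finally show ?thesis .
qed

lemma gfun_lip:
  assumes "n > 0" "\<And>k. k < 2*n*n \<Longrightarrow> \<bar>s k\<bar> \<le> 1"
  shows "1-lipschitz_on UNIV (gfun n s)"
proof (rule lipschitz_onI)
  fix x y :: real
  show "dist (gfun n s x) (gfun n s y) \<le> 1 * dist x y"
  proof (cases "x \<le> y")
    case True then show ?thesis using gfun_lip_aux[OF assms True] by (simp add: dist_real_def abs_minus_commute)
  next
    case False then show ?thesis using gfun_lip_aux[OF assms, where x=y and y=x] by (simp add: dist_real_def)
  qed
qed simp

lemma lipD1: "C-lipschitz_on UNIV f \<Longrightarrow> \<bar>f x - f y\<bar> \<le> C * \<bar>x - y\<bar>"
  using lipschitz_onD[of C UNIV f x y] by (simp add: dist_real_def)

primrec greedy :: "(nat \<Rightarrow> real) \<Rightarrow> real \<Rightarrow> nat \<Rightarrow> real" where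
  "greedy v d 0 = 0"
| "greedy v d (Suc k) = greedy v d k + (if greedy v d k \<le> v (Suc k) then d else - d)"

lemma greedy_close:
  assumes "v 0 = 0" "\<And>k. \<bar>v (Suc k) - v k\<bar> \<le> d"
  shows "\<bar>greedy v d k - v k\<bar> \<le> d"
proof (induction k)
  case 0 then show ?case using assms(1) assms(2)[of 0] by simp
next
  case (Suc k)
  have "\<bar>v (Suc k) - v k\<bar> \<le> d" by (rule assms(2))
  then show ?case using Suc by (auto simp: abs_if split: if_splits)
qed

lemma greedy_sum:
  "greedy v d k = (\<Sum>j<k. (if greedy v d j \<le> v (Suc j) then 1 else -1) * d)"
  by (induction k) auto

lemma gfun_grid:
  assumes "n > 0" "k \<le> 2*n*n"
  shows "gfun n s (- real n + real k * (1 / real n)) = (\<Sum>j<k. s j * (1 / real n))"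
proof -
  have t: "ramp (- real n + real j * (1 / real n)) (1 / real n) (- real n + real k * (1 / real n))
      = (if j < k then 1 / real n else 0)" for j
  proof -
    have eq: "- real n + real k * (1 / real n) - (- real n + real j * (1 / real n)) = (real k - real j) / real n"
      by (simp add: diff_divide_distrib)
    show ?thesis
    proof (cases "j < k")
      case True
      then have "1 \<le> real k - real j" by linarith
      then have "1 / real n \<le> (real k - real j) / real n" using assms(1) by (simp add: divide_right_mono)
      then show ?thesis using True unfolding ramp_def eq by simp
    next
      case False
      then have "real k - real j \<le> 0" by simp
      then have "(real k - real j) / real n \<le> 0" using assms(1) by (simp add: divide_nonpos_pos)
      then show ?thesis using False unfolding ramp_def eq by simp
    qed
  qed
  have "gfun n s (- real n + real k * (1 / real n)) = (\<Sum>j<2*n*n. if j < k then s j * (1 / real n) else 0)"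
    unfolding gfun_def t by (intro sum.cong) auto
  also have "\<dots> = (\<Sum>j\<in>{j\<in>{..<2*n*n}. j < k}. s j * (1 / real n))"
    by (rule sum.inter_filter[symmetric]) simp
  also have "{j\<in>{..<2*n*n}. j < k} = {..<k}" using assms(2) by auto
  finally show ?thesis by simp
qed

lemma ramp_clamp:
  fixes N a d x :: real
  assumes "- N \<le> a" "a + d \<le> N" "0 \<le> d"
  shows "ramp a d x = ramp a d (max (- N) (min N x))"
  using assms unfolding ramp_def by (auto simp: min_def max_def)

lemma gfun_clamp:
  assumes "n > 0"
  shows "gfun n s x = gfun n s (max (- real n) (min (real n) x))"
  unfolding gfun_def
proof (intro sum.cong refl)
  fix j assume "j \<in> {..<2*n*n}"
  then have j: "j + 1 \<le> 2*n*n" by simp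
  define a where "a = - real n + real j * (1 / real n)"
  have "real j * (1 / real n) \<ge> 0" by simp
  then have a1: "- real n \<le> a" unfolding a_def by simp
  have "real (j+1) \<le> real (2*n*n)" using j by linarith
  then have "real (j+1) \<le> 2 * real n * real n" by simp
  then have "(real j + 1) / real n \<le> 2 * real n" using assms by (simp add: pos_divide_le_eq)
  moreover have "a + 1 / real n = - real n + (real j + 1) / real n" by (simp add: a_def add_divide_distrib)
  ultimately have "a + 1 / real n \<le> real n" by linarith
  then have "ramp a (1 / real n) x = ramp a (1 / real n) (max (- real n) (min (real n) x))"
    using a1 by (intro ramp_clamp) auto
  then show "s j * ramp (- real n + real j * (1 / real n)) (1 / real n) x =
         s j * ramp (- real n + real j * (1 / real n)) (1 / real n) (max (- real n) (min (real n) x))"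
    unfolding a_def by simp
qed

lemma approx:
  assumes "n > 0" and f: "1-lipschitz_on UNIV f"
  shows "\<exists>s\<in>(\<Pi>\<^sub>E k\<in>{..<2*n*n}. {-1,1}). \<forall>x. \<bar>f x - f (- real n) - gfun n s x\<bar> \<le> 3 / real n + max 0 (\<bar>x\<bar> - real n)"
proof -
  define d :: real where "d = 1 / real n"
  have d0: "0 < d" using assms by (simp add: d_def)
  define t where "t k = - real n + real k * d" for k
  define v where "v k = f (t k) - f (- real n)" for k
  have v0: "v 0 = 0" by (simp add: v_def t_def)
  have vs: "\<bar>v (Suc k) - v k\<bar> \<le> d" for k
  proof -
    have "\<bar>v (Suc k) - v k\<bar> = \<bar>f (t (Suc k)) - f (t k)\<bar>" by (simp add: v_def)
    also have "\<dots> \<le> 1 * \<bar>t (Suc k) - t k\<bar>" by (rule lipD1[OF f])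
    also have "\<dots> = d" using d0 by (simp add: t_def algebra_simps)
    finally show ?thesis .
  qed
  define s0 where "s0 j = (if greedy v d j \<le> v (Suc j) then 1 else -1 :: real)" for j
  define s where "s = restrict s0 {..<2*n*n}"
  have sP: "s \<in> (\<Pi>\<^sub>E k\<in>{..<2*n*n}. {-1,1})" by (auto simp: s_def s0_def)
  have gs: "gfun n s = gfun n s0" unfolding gfun_def s_def by (intro ext sum.cong) auto
  have gl: "1-lipschitz_on UNIV (gfun n s0)" unfolding gs[symmetric]
    by (rule gfun_lip[OF assms(1)]) (auto simp: s_def s0_def)
  have grid: "gfun n s0 (t k) = greedy v d k" if "k \<le> 2*n*n" for k
  proof -
    have "gfun n s0 (t k) = (\<Sum>j<k. s0 j * d)" using gfun_grid[OF assms(1) that, of s0] by (simp add: t_def d_def)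
    also have "\<dots> = greedy v d k" by (simp only: greedy_sum[of v d k] s0_def)
    finally show ?thesis .
  qed
  have inner: "\<bar>f x - f (- real n) - gfun n s0 x\<bar> \<le> 3 * d" if x: "- real n \<le> x" "x \<le> real n" for x
  proof -
    define y where "y = (x + real n) * real n"
    have y0: "0 \<le> y" using x by (simp add: y_def)
    have y1: "y \<le> real (2*n*n)" using x assms by (simp add: y_def mult_right_mono)
    define k where "k = nat \<lfloor>y\<rfloor>"
    have ky: "real k \<le> y" "y < real k + 1" using y0 by (simp_all add: k_def)
    have kN: "k \<le> 2*n*n" using y1 ky(1) by linarith
    have tx: "t k \<le> x" "x \<le> t k + d"
    proof -
      have "real k * d \<le> y * d" using ky d0 by (simp add: mult_right_mono)
      also have yd: "y * d = x + real n" using assms by (simp add: y_def d_def)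
      finally show "t k \<le> x" by (simp add: t_def)
      have "y * d \<le> (real k + 1) * d" using ky d0 by (simp add: mult_right_mono)
      moreover have "(real k + 1) * d = real k * d + d" by (simp add: algebra_simps)
      ultimately show "x \<le> t k + d" using \<open>y * d = x + real n\<close> by (simp add: t_def)
    qed
    have "\<bar>f x - f (- real n) - gfun n s0 x\<bar> \<le> \<bar>f x - f (t k)\<bar> + \<bar>v k - greedy v d k\<bar> + \<bar>gfun n s0 (t k) - gfun n s0 x\<bar>"
      using grid[OF kN] by (simp add: v_def)
    also have "\<dots> \<le> d + d + d"
      using lipD1[OF f, of x "t k"] lipD1[OF gl, of "t k" x] greedy_close[OF v0 vs, of k] tx
      by (simp add: abs_minus_commute)
    finally show ?thesis by simp
  qed
  show ?thesis
  proof (intro bexI[OF _ sP] allI)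
    fix x
    define x' where "x' = max (- real n) (min (real n) x)"
    have "\<bar>f x - f (- real n) - gfun n s x\<bar> = \<bar>(f x - f x') + (f x' - f (- real n) - gfun n s0 x')\<bar>"
      unfolding gs x'_def using gfun_clamp[OF assms(1), of s0 x] by simp
    also have "\<dots> \<le> \<bar>f x - f x'\<bar> + \<bar>f x' - f (- real n) - gfun n s0 x'\<bar>" by (rule abs_triangle_ineq)
    also have "\<dots> \<le> \<bar>x - x'\<bar> + 3 * d"
      using lipD1[OF f, of x x'] inner[of x'] assms by (simp add: x'_def)
    also have "\<bar>x - x'\<bar> = max 0 (\<bar>x\<bar> - real n)" by (auto simp: x'_def)
    finally show "\<bar>f x - f (- real n) - gfun n s x\<bar> \<le> 3 / real n + max 0 (\<bar>x\<bar> - real n)"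
      by (simp add: d_def)
  qed
qed



definition tailf :: "real \<Rightarrow> real \<Rightarrow> real" where
  "tailf r x = max 0 (\<bar>x\<bar> - r)"

lemma tail_lip: "1-lipschitz_on UNIV (tailf r)"
  by (rule lipschitz_onI) (auto simp: dist_real_def tailf_def max_def abs_if)

lemma lip_borel: "C-lipschitz_on UNIV f \<Longrightarrow> f \<in> borel_measurable borel"
  by (intro borel_measurable_continuous_onI lipschitz_on_continuous_on)

lemma P1_prob: "P1 \<mu> \<Longrightarrow> prob_space \<mu>" by (simp add: P1_def)

lemma P1_meas: "P1 \<mu> \<Longrightarrow> f \<in> borel_measurable borel \<Longrightarrow> f \<in> borel_measurable \<mu>"
  unfolding P1_def using measurable_cong_sets[of \<mu> borel borel borel] by auto

lemma P1_const: "P1 \<mu> \<Longrightarrow> (\<integral>x. (c::real) \<partial>\<mu>) = c"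
  using prob_space.prob_space[OF P1_prob] by simp

lemma P1_int:
  fixes f :: "real \<Rightarrow> real"
  assumes "P1 \<mu>" "C-lipschitz_on UNIV f"
  shows "integrable \<mu> f"
proof -
  have ps: "prob_space \<mu>" using assms(1) by (rule P1_prob)
  have ia: "integrable \<mu> (\<lambda>x. \<bar>x\<bar>)" using assms(1) by (simp add: P1_def)
  have "integrable \<mu> (\<lambda>x. \<bar>f 0\<bar> + C * \<bar>x\<bar>)"
  proof -
    have i1: "integrable \<mu> (\<lambda>x. \<bar>f 0\<bar>)" using ps by (simp add: prob_space.finite_measure finite_measure.integrable_const)
    have i2: "integrable \<mu> (\<lambda>x. C * \<bar>x\<bar>)" using ia by simp
    show ?thesis by (rule Bochner_Integration.integrable_add[OF i1 i2])
  qed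
  moreover have "f \<in> borel_measurable \<mu>" by (rule P1_meas[OF assms(1) lip_borel[OF assms(2)]])
  moreover have "AE x in \<mu>. norm (f x) \<le> norm (\<bar>f 0\<bar> + C * \<bar>x\<bar>)"
  proof (intro AE_I2)
    fix x
    have C: "0 \<le> C" using assms(2) by (rule lipschitz_on_nonneg)
    have "\<bar>f x - f 0\<bar> \<le> C * \<bar>x - 0\<bar>" by (rule lipD1[OF assms(2)])
    then show "norm (f x) \<le> norm (\<bar>f 0\<bar> + C * \<bar>x\<bar>)" using C by simp
  qed
  ultimately show ?thesis by (rule Bochner_Integration.integrable_bound)
qed

lemma err_bound:
  assumes "P1 \<rho>" "1-lipschitz_on UNIV f" "1-lipschitz_on UNIV g"
    and b: "\<And>x. \<bar>f x - c - g x\<bar> \<le> B + tailf r x"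
  shows "\<bar>(\<integral>x. f x \<partial>\<rho>) - c - (\<integral>x. g x \<partial>\<rho>)\<bar> \<le> B + (\<integral>x. tailf r x \<partial>\<rho>)"
proof -
  have If: "integrable \<rho> f" and Ig: "integrable \<rho> g" and It: "integrable \<rho> (tailf r)"
    using P1_int[OF assms(1,2)] P1_int[OF assms(1,3)] P1_int[OF assms(1) tail_lip] by auto
  have ps: "prob_space \<rho>" using assms(1) by (rule P1_prob)
  have Ic: "integrable \<rho> (\<lambda>x. c)" for c :: real
    using ps by (simp add: prob_space.finite_measure finite_measure.integrable_const)
  have "(\<integral>x. f x - c - g x \<partial>\<rho>) = (\<integral>x. f x \<partial>\<rho>) - c - (\<integral>x. g x \<partial>\<rho>)"
    using If Ig Ic P1_const[OF assms(1)] by simp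
  moreover have "(\<integral>x. B + tailf r x \<partial>\<rho>) = B + (\<integral>x. tailf r x \<partial>\<rho>)"
    using It Ic P1_const[OF assms(1)] by simp
  moreover have "\<bar>\<integral>x. f x - c - g x \<partial>\<rho>\<bar> \<le> (\<integral>x. B + tailf r x \<partial>\<rho>)"
    using If Ig Ic It b by (intro integral_abs_bound_integral) auto
  ultimately show ?thesis by simp
qed

lemma tri_aux:
  fixes F1 F2 G1 G2 c b1 b2 :: real
  assumes "\<bar>F1 - c - G1\<bar> \<le> b1" "\<bar>F2 - c - G2\<bar> \<le> b2"
  shows "\<bar>F1 - F2\<bar> \<le> \<bar>G1 - G2\<bar> + (b1 + b2)"
proof -
  have "\<bar>F1 - F2\<bar> \<le> \<bar>(F1 - c - G1) - (F2 - c - G2)\<bar> + \<bar>G1 - G2\<bar>"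
    using abs_triangle_ineq[of "(F1 - c - G1) - (F2 - c - G2)" "G1 - G2"] by simp
  moreover have "\<bar>(F1 - c - G1) - (F2 - c - G2)\<bar> \<le> \<bar>F1 - c - G1\<bar> + \<bar>F2 - c - G2\<bar>"
    by (rule abs_triangle_ineq4)
  ultimately show ?thesis using assms by linarith
qed

lemma compare:
  assumes "P1 \<mu>" "P1 \<nu>" "1-lipschitz_on UNIV f" "1-lipschitz_on UNIV g"
    and b: "\<And>x. \<bar>f x - c - g x\<bar> \<le> B + tailf r x"
  shows "\<bar>(\<integral>x. f x \<partial>\<mu>) - (\<integral>x. f x \<partial>\<nu>)\<bar> \<le> \<bar>(\<integral>x. g x \<partial>\<mu>) - (\<integral>x. g x \<partial>\<nu>)\<bar> + 2 * B + (\<integral>x. tailf r x \<partial>\<mu>) + (\<integral>x. tailf r x \<partial>\<nu>)"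
proof -
  have e1: "\<bar>(\<integral>x. f x \<partial>\<mu>) - c - (\<integral>x. g x \<partial>\<mu>)\<bar> \<le> B + (\<integral>x. tailf r x \<partial>\<mu>)"
    by (rule err_bound[OF assms(1,3,4) b])
  have e2: "\<bar>(\<integral>x. f x \<partial>\<nu>) - c - (\<integral>x. g x \<partial>\<nu>)\<bar> \<le> B + (\<integral>x. tailf r x \<partial>\<nu>)"
    by (rule err_bound[OF assms(2,3,4) b])
  show ?thesis using tri_aux[OF e1 e2] by simp
qed

lemma term_bound:
  assumes "P1 \<mu>" "P1 \<nu>" "1-lipschitz_on UNIV f"
  shows "\<bar>(\<integral>x. f x \<partial>\<mu>) - (\<integral>x. f x \<partial>\<nu>)\<bar> \<le> (\<integral>x. \<bar>x\<bar> \<partial>\<mu>) + (\<integral>x. \<bar>x\<bar> \<partial>\<nu>)"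
proof -
  have z: "1-lipschitz_on UNIV (\<lambda>x::real. 0::real)" by (rule lipschitz_onI) auto
  have b: "\<bar>f x - f 0 - 0\<bar> \<le> 0 + tailf 0 x" for x
    using lipD1[OF assms(3), of x 0] by (simp add: tailf_def)
  have "\<bar>(\<integral>x. f x \<partial>\<mu>) - (\<integral>x. f x \<partial>\<nu>)\<bar> \<le> \<bar>(\<integral>x. 0 \<partial>\<mu>) - (\<integral>x. 0 \<partial>\<nu>)\<bar> + 2 * 0 + (\<integral>x. tailf 0 x \<partial>\<mu>) + (\<integral>x. tailf 0 x \<partial>\<nu>)"
    by (rule compare[OF assms z b])
  moreover have "tailf 0 = (\<lambda>x. \<bar>x\<bar>)" by (auto simp: tailf_def)
  ultimately show ?thesis by simp
qed

definition Lip1 :: "(real \<Rightarrow> real) set" where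
  "Lip1 = {f. 1-lipschitz_on UNIV f}"

lemma W1_bdd:
  assumes "P1 \<mu>" "P1 \<nu>"
  shows "bdd_above ((\<lambda>f. \<bar>(\<integral>x. f x \<partial>\<mu>) - (\<integral>x. f x \<partial>\<nu>)\<bar>) ` Lip1)"
  using term_bound[OF assms] unfolding Lip1_def by (intro bdd_aboveI2) auto

lemma W1_upper:
  assumes "P1 \<mu>" "P1 \<nu>" "1-lipschitz_on UNIV f"
  shows "\<bar>(\<integral>x. f x \<partial>\<mu>) - (\<integral>x. f x \<partial>\<nu>)\<bar> \<le> W1 \<mu> \<nu>"
  unfolding W1_def using W1_bdd[OF assms(1,2)] assms(3) unfolding Lip1_def
  by (intro cSUP_upper) auto

lemma W1_nonneg:
  assumes "P1 \<mu>" "P1 \<nu>"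
  shows "0 \<le> W1 \<mu> \<nu>"
proof -
  have z: "1-lipschitz_on UNIV (\<lambda>x::real. 0::real)" by (rule lipschitz_onI) auto
  show ?thesis using W1_upper[OF assms z] by simp
qed

definition Dset :: "nat \<Rightarrow> (real \<Rightarrow> real) set" where
  "Dset n = gfun n ` (\<Pi>\<^sub>E k\<in>{..<2*n*n}. {-1,1})"

lemma Dset_finite: "finite (Dset n)"
  unfolding Dset_def by (intro finite_imageI finite_PiE) auto

lemma Dset_lip: "n > 0 \<Longrightarrow> g \<in> Dset n \<Longrightarrow> 1-lipschitz_on UNIV g"
proof -
  assume n: "n > 0" and g: "g \<in> Dset n"
  then obtain s where s: "s \<in> (\<Pi>\<^sub>E k\<in>{..<2*n*n}. {-1,1})" and gs: "g = gfun n s"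
    unfolding Dset_def by blast
  have "\<bar>s k\<bar> \<le> 1" if "k < 2*n*n" for k
  proof -
    have "s k \<in> {-1,1}" using s that by (auto simp: PiE_def Pi_def)
    then show ?thesis by auto
  qed
  then show ?thesis unfolding gs by (rule gfun_lip[OF n])
qed

lemma W1_le_gridS:
  assumes "P1 \<mu>" "P1 \<nu>" "n > 0"
    and S: "\<And>g. g \<in> Dset n \<Longrightarrow> \<bar>(\<integral>x. g x \<partial>\<mu>) - (\<integral>x. g x \<partial>\<nu>)\<bar> \<le> S"
  shows "W1 \<mu> \<nu> \<le> S + 6 / real n
      + (\<integral>x. tailf (real n) x \<partial>\<mu>) + (\<integral>x. tailf (real n) x \<partial>\<nu>)"
  unfolding W1_def
proof (rule cSUP_least)
  have "1-lipschitz_on UNIV (\<lambda>x::real. 0::real)" by (rule lipschitz_onI) auto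
  then have "(\<lambda>x::real. 0::real) \<in> {f :: real \<Rightarrow> real. 1-lipschitz_on UNIV f}" by simp
  then show "{f :: real \<Rightarrow> real. 1-lipschitz_on UNIV f} \<noteq> {}" by (metis empty_iff)
next
  fix f :: "real \<Rightarrow> real" assume "f \<in> {f :: real \<Rightarrow> real. 1-lipschitz_on UNIV f}"
  then have f: "1-lipschitz_on UNIV f" by simp
  obtain s where s: "s \<in> (\<Pi>\<^sub>E k\<in>{..<2*n*n}. {-1,1})"
    and b: "\<And>x. \<bar>f x - f (- real n) - gfun n s x\<bar> \<le> 3 / real n + max 0 (\<bar>x\<bar> - real n)"
    using approx[OF assms(3) f] by (elim bexE) auto
  have gD: "gfun n s \<in> Dset n" unfolding Dset_def by (rule imageI[OF s])
  have gl: "1-lipschitz_on UNIV (gfun n s)" by (rule Dset_lip[OF assms(3) gD])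
  have "\<bar>(\<integral>x. f x \<partial>\<mu>) - (\<integral>x. f x \<partial>\<nu>)\<bar> \<le> \<bar>(\<integral>x. gfun n s x \<partial>\<mu>) - (\<integral>x. gfun n s x \<partial>\<nu>)\<bar> + 2 * (3 / real n)
       + (\<integral>x. tailf (real n) x \<partial>\<mu>) + (\<integral>x. tailf (real n) x \<partial>\<nu>)"
  proof (rule compare[OF assms(1,2) f gl, where c="f (- real n)"])
    fix x show "\<bar>f x - f (- real n) - gfun n s x\<bar> \<le> 3 / real n + tailf (real n) x"
      using b[of x] by (simp add: tailf_def)
  qed
  moreover have "\<bar>(\<integral>x. gfun n s x \<partial>\<mu>) - (\<integral>x. gfun n s x \<partial>\<nu>)\<bar> \<le> S"
    by (rule S[OF gD])
  ultimately show "\<bar>(\<integral>x. f x \<partial>\<mu>) - (\<integral>x. f x \<partial>\<nu>)\<bar> \<le> S + 6 / real n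
      + (\<integral>x. tailf (real n) x \<partial>\<mu>) + (\<integral>x. tailf (real n) x \<partial>\<nu>)" by linarith
qed


lemma W1_le_grid:
  assumes "P1 \<mu>" "P1 \<nu>" "n > 0"
  shows "W1 \<mu> \<nu> \<le> (\<Sum>g\<in>Dset n. \<bar>(\<integral>x. g x \<partial>\<mu>) - (\<integral>x. g x \<partial>\<nu>)\<bar>) + 6 / real n
      + (\<integral>x. tailf (real n) x \<partial>\<mu>) + (\<integral>x. tailf (real n) x \<partial>\<nu>)"
  by (rule W1_le_gridS[OF assms]) (rule member_le_sum[OF _ _ Dset_finite], simp_all)



lemma tail_lim:
  assumes "P1 \<mu>"
  shows "(\<lambda>n. \<integral>x. tailf (real n) x \<partial>\<mu>) \<longlonglongrightarrow> 0"
proof -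
  have "(\<lambda>n. \<integral>x. tailf (real n) x \<partial>\<mu>) \<longlonglongrightarrow> (\<integral>x. (0::real) \<partial>\<mu>)"
  proof (rule integral_dominated_convergence[where w="\<lambda>x. \<bar>x\<bar>"])
    show "(\<lambda>x. 0::real) \<in> borel_measurable \<mu>" by simp
    show "tailf (real i) \<in> borel_measurable \<mu>" for i
      by (rule P1_meas[OF assms lip_borel[OF tail_lip]])
    show "integrable \<mu> (\<lambda>x. \<bar>x\<bar>)" using assms by (simp add: P1_def)
    show "AE x in \<mu>. (\<lambda>i. tailf (real i) x) \<longlonglongrightarrow> 0"
    proof (intro AE_I2 tendsto_eventually)
      fix x :: real
      show "\<forall>\<^sub>F i in sequentially. tailf (real i) x = 0"
        unfolding eventually_sequentially
      proof (intro exI allI impI)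
        fix i assume "nat \<lceil>\<bar>x\<bar>\<rceil> \<le> i"
        then have "\<bar>x\<bar> \<le> real i" by linarith
        then show "tailf (real i) x = 0" by (simp add: tailf_def)
      qed
    qed
    show "AE x in \<mu>. norm (tailf (real i) x) \<le> \<bar>x\<bar>" for i
    proof (intro AE_I2)
      fix x :: real
      have "0 \<le> real i" by simp
      then show "norm (tailf (real i) x) \<le> \<bar>x\<bar>" unfolding tailf_def by (simp add: max_def)
    qed
  qed
  then show ?thesis by simp
qed

definition Dall :: "(real \<Rightarrow> real) set" where
  "Dall = (\<Union>n. Dset (Suc n))"

lemma Dall_countable: "countable Dall"
  unfolding Dall_def by (rule countable_UN) (simp_all add: countable_finite[OF Dset_finite])

lemma Dall_lip: "g \<in> Dall \<Longrightarrow> 1-lipschitz_on UNIV g"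
  unfolding Dall_def using Dset_lip by blast

lemma Dset_ne: "Dset n \<noteq> {}"
proof -
  have "restrict (\<lambda>k. 1::real) {..<2*n*n} \<in> (\<Pi>\<^sub>E k\<in>{..<2*n*n}. {-1,1})" by auto
  then show ?thesis unfolding Dset_def by blast
qed

lemma Dall_ne: "Dall \<noteq> {}"
  unfolding Dall_def using Dset_ne[of 1] by auto

lemma Dall_bdd:
  assumes "P1 \<mu>" "P1 \<nu>"
  shows "bdd_above ((\<lambda>g. \<bar>(\<integral>x. g x \<partial>\<mu>) - (\<integral>x. g x \<partial>\<nu>)\<bar>) ` Dall)"
  using term_bound[OF assms Dall_lip] by (intro bdd_aboveI2) auto

lemma W1_eq:
  assumes "P1 \<mu>" "P1 \<nu>"
  shows "W1 \<mu> \<nu> = (SUP g\<in>Dall. \<bar>(\<integral>x. g x \<partial>\<mu>) - (\<integral>x. g x \<partial>\<nu>)\<bar>)"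
proof (rule antisym)
  define W' where "W' = (SUP g\<in>Dall. \<bar>(\<integral>x. g x \<partial>\<mu>) - (\<integral>x. g x \<partial>\<nu>)\<bar>)"
  have up: "\<bar>(\<integral>x. g x \<partial>\<mu>) - (\<integral>x. g x \<partial>\<nu>)\<bar> \<le> W'" if "g \<in> Dall" for g
    unfolding W'_def by (rule cSUP_upper[OF that Dall_bdd[OF assms]])
  have le: "W1 \<mu> \<nu> \<le> W' + 6 / real (Suc m) + (\<integral>x. tailf (real (Suc m)) x \<partial>\<mu>) + (\<integral>x. tailf (real (Suc m)) x \<partial>\<nu>)" for m
  proof (rule W1_le_gridS[OF assms])
    fix g assume "g \<in> Dset (Suc m)"
    then have "g \<in> Dall" unfolding Dall_def by blast
    then show "\<bar>(\<integral>x. g x \<partial>\<mu>) - (\<integral>x. g x \<partial>\<nu>)\<bar> \<le> W'" by (rule up)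
  qed simp
  have lim: "(\<lambda>m. W' + 6 / real (Suc m) + (\<integral>x. tailf (real (Suc m)) x \<partial>\<mu>) + (\<integral>x. tailf (real (Suc m)) x \<partial>\<nu>)) \<longlonglongrightarrow> W' + 0 + 0 + 0"
  proof (intro tendsto_add tendsto_const)
    show "(\<lambda>m. 6 / real (Suc m)) \<longlonglongrightarrow> 0"
      using LIMSEQ_Suc[OF lim_const_over_n[of "6::real"]] by simp
    show "(\<lambda>m. \<integral>x. tailf (real (Suc m)) x \<partial>\<mu>) \<longlonglongrightarrow> 0"
      using LIMSEQ_Suc[OF tail_lim[OF assms(1)]] by simp
    show "(\<lambda>m. \<integral>x. tailf (real (Suc m)) x \<partial>\<nu>) \<longlonglongrightarrow> 0"
      using LIMSEQ_Suc[OF tail_lim[OF assms(2)]] by simp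
  qed
  have "W1 \<mu> \<nu> \<le> W' + 0 + 0 + 0"
    by (rule LIMSEQ_le_const[OF lim]) (use le in blast)
  then show "W1 \<mu> \<nu> \<le> (SUP g\<in>Dall. \<bar>(\<integral>x. g x \<partial>\<mu>) - (\<integral>x. g x \<partial>\<nu>)\<bar>)" by (simp add: W'_def)
next
  show "(SUP g\<in>Dall. \<bar>(\<integral>x. g x \<partial>\<mu>) - (\<integral>x. g x \<partial>\<nu>)\<bar>) \<le> W1 \<mu> \<nu>"
    by (rule cSUP_least[OF Dall_ne]) (rule W1_upper[OF assms Dall_lip])
qed



lemma cip_set:
  fixes X :: "'a \<Rightarrow> real"
  assumes "X \<in> borel_measurable M"
  shows "{\<omega> \<in> space M. e < \<bar>X \<omega>\<bar>} \<in> sets M"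
  by (rule borel_measurable_less[OF borel_measurable_const borel_measurable_abs[OF assms]])

lemma cipD: "conv_in_prob_zero M Z \<Longrightarrow> e > 0 \<Longrightarrow> (\<lambda>n. measure M {\<omega> \<in> space M. e < \<bar>Z n \<omega>\<bar>}) \<longlonglongrightarrow> 0"
  unfolding conv_in_prob_zero_def by blast

lemma cip_le:
  assumes M: "prob_space M" and Z: "conv_in_prob_zero M Z"
    and X: "\<And>n. X n \<in> borel_measurable M" and e: "e > 0"
    and le: "\<And>n \<omega>. \<omega> \<in> space M \<Longrightarrow> \<bar>X n \<omega>\<bar> \<le> \<bar>Z n \<omega>\<bar> + e / 2"
  shows "(\<lambda>n. measure M {\<omega> \<in> space M. e < \<bar>X n \<omega>\<bar>}) \<longlonglongrightarrow> 0"
proof (rule tendsto_sandwich[where f="\<lambda>n. 0" and h="\<lambda>n. measure M {\<omega> \<in> space M. e / 2 < \<bar>Z n \<omega>\<bar>}"])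
  have Zm: "Z n \<in> borel_measurable M" for n using Z by (simp add: conv_in_prob_zero_def)
  show "\<forall>\<^sub>F n in sequentially. 0 \<le> measure M {\<omega> \<in> space M. e < \<bar>X n \<omega>\<bar>}" by simp
  show "\<forall>\<^sub>F n in sequentially. measure M {\<omega> \<in> space M. e < \<bar>X n \<omega>\<bar>} \<le> measure M {\<omega> \<in> space M. e / 2 < \<bar>Z n \<omega>\<bar>}"
  proof (intro always_eventually allI)
    fix n
    have sub: "{\<omega> \<in> space M. e < \<bar>X n \<omega>\<bar>} \<subseteq> {\<omega> \<in> space M. e / 2 < \<bar>Z n \<omega>\<bar>}"
      using le[of _ n] by force
    show "measure M {\<omega> \<in> space M. e < \<bar>X n \<omega>\<bar>} \<le> measure M {\<omega> \<in> space M. e / 2 < \<bar>Z n \<omega>\<bar>}"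
      by (rule finite_measure.finite_measure_mono[OF prob_space.finite_measure[OF M] sub cip_set[OF Zm[of n]]])
  qed
  show "(\<lambda>n. 0) \<longlonglongrightarrow> 0" by simp
  show "(\<lambda>n. measure M {\<omega> \<in> space M. e / 2 < \<bar>Z n \<omega>\<bar>}) \<longlonglongrightarrow> 0"
    by (rule cipD[OF Z]) (simp add: e)
qed

lemma cip_add:
  assumes M: "prob_space M" and X: "conv_in_prob_zero M X" and Y: "conv_in_prob_zero M Y"
  shows "conv_in_prob_zero M (\<lambda>n \<omega>. X n \<omega> + Y n \<omega>)"
  unfolding conv_in_prob_zero_def
proof (intro conjI allI impI)
  have Xm: "X n \<in> borel_measurable M" for n using X by (simp add: conv_in_prob_zero_def)
  have Ym: "Y n \<in> borel_measurable M" for n using Y by (simp add: conv_in_prob_zero_def)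
  show "(\<lambda>\<omega>. X n \<omega> + Y n \<omega>) \<in> borel_measurable M" for n
    using Xm[of n] Ym[of n] by simp
  fix e :: real assume e: "0 < e"
  have e2: "0 < e / 2" using e by simp
  show "(\<lambda>n. measure M {\<omega> \<in> space M. e < \<bar>X n \<omega> + Y n \<omega>\<bar>}) \<longlonglongrightarrow> 0"
  proof (rule tendsto_sandwich[where f="\<lambda>n. 0" and h="\<lambda>n. measure M {\<omega> \<in> space M. e / 2 < \<bar>X n \<omega>\<bar>} + measure M {\<omega> \<in> space M. e / 2 < \<bar>Y n \<omega>\<bar>}"])
    show "\<forall>\<^sub>F n in sequentially. 0 \<le> measure M {\<omega> \<in> space M. e < \<bar>X n \<omega> + Y n \<omega>\<bar>}" by simp
    show "\<forall>\<^sub>F n in sequentially. measure M {\<omega> \<in> space M. e < \<bar>X n \<omega> + Y n \<omega>\<bar>} \<le> measure M {\<omega> \<in> space M. e / 2 < \<bar>X n \<omega>\<bar>} + measure M {\<omega> \<in> space M. e / 2 < \<bar>Y n \<omega>\<bar>}"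
    proof (intro always_eventually allI)
      fix n
      have sub: "{\<omega> \<in> space M. e < \<bar>X n \<omega> + Y n \<omega>\<bar>} \<subseteq> {\<omega> \<in> space M. e / 2 < \<bar>X n \<omega>\<bar>} \<union> {\<omega> \<in> space M. e / 2 < \<bar>Y n \<omega>\<bar>}"
      proof
        fix \<omega> assume "\<omega> \<in> {\<omega> \<in> space M. e < \<bar>X n \<omega> + Y n \<omega>\<bar>}"
        then have "\<omega> \<in> space M" "e < \<bar>X n \<omega> + Y n \<omega>\<bar>" by auto
        moreover have "\<bar>X n \<omega> + Y n \<omega>\<bar> \<le> \<bar>X n \<omega>\<bar> + \<bar>Y n \<omega>\<bar>" by (rule abs_triangle_ineq)
        ultimately show "\<omega> \<in> {\<omega> \<in> space M. e / 2 < \<bar>X n \<omega>\<bar>} \<union> {\<omega> \<in> space M. e / 2 < \<bar>Y n \<omega>\<bar>}"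
          by auto
      qed
      have "measure M {\<omega> \<in> space M. e < \<bar>X n \<omega> + Y n \<omega>\<bar>} \<le> measure M ({\<omega> \<in> space M. e / 2 < \<bar>X n \<omega>\<bar>} \<union> {\<omega> \<in> space M. e / 2 < \<bar>Y n \<omega>\<bar>})"
        by (rule finite_measure.finite_measure_mono[OF prob_space.finite_measure[OF M] sub sets.Un[OF cip_set[OF Xm[of n]] cip_set[OF Ym[of n]]]])
      also have "\<dots> \<le> measure M {\<omega> \<in> space M. e / 2 < \<bar>X n \<omega>\<bar>} + measure M {\<omega> \<in> space M. e / 2 < \<bar>Y n \<omega>\<bar>}"
        by (rule measure_Un_le[OF cip_set[OF Xm[of n]] cip_set[OF Ym[of n]]])
      finally show "measure M {\<omega> \<in> space M. e < \<bar>X n \<omega> + Y n \<omega>\<bar>} \<le> measure M {\<omega> \<in> space M. e / 2 < \<bar>X n \<omega>\<bar>} + measure M {\<omega> \<in> space M. e / 2 < \<bar>Y n \<omega>\<bar>}" .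
    qed
    show "(\<lambda>n. 0) \<longlonglongrightarrow> 0" by simp
    have "(\<lambda>n. measure M {\<omega> \<in> space M. e / 2 < \<bar>X n \<omega>\<bar>} + measure M {\<omega> \<in> space M. e / 2 < \<bar>Y n \<omega>\<bar>}) \<longlonglongrightarrow> 0 + 0"
      by (intro tendsto_add cipD[OF X e2] cipD[OF Y e2])
    then show "(\<lambda>n. measure M {\<omega> \<in> space M. e / 2 < \<bar>X n \<omega>\<bar>} + measure M {\<omega> \<in> space M. e / 2 < \<bar>Y n \<omega>\<bar>}) \<longlonglongrightarrow> 0" by simp
  qed
qed

lemma cip_zero: "conv_in_prob_zero M (\<lambda>n \<omega>. 0)"
  unfolding conv_in_prob_zero_def by auto

lemma cip_sum:
  assumes M: "prob_space M" and "finite I" and "\<And>i. i \<in> I \<Longrightarrow> conv_in_prob_zero M (X i)"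
  shows "conv_in_prob_zero M (\<lambda>n \<omega>. \<Sum>i\<in>I. X i n \<omega>)"
  using assms(2,3)
proof (induction I rule: finite_induct)
  case empty then show ?case using cip_zero by simp
next
  case (insert a F)
  have "conv_in_prob_zero M (\<lambda>n \<omega>. X a n \<omega> + (\<Sum>i\<in>F. X i n \<omega>))"
    using insert by (intro cip_add[OF M]) auto
  then show ?case using insert by simp
qed



lemma tail_UI:
  assumes "P1 \<nu>" "K \<le> r" "0 \<le> r"
  shows "(\<integral>x. tailf r x \<partial>\<nu>) \<le> (LINT x:{x. K < \<bar>x\<bar>}|\<nu>. \<bar>x\<bar>)"
proof -
  have A: "{x::real. K < \<bar>x\<bar>} \<in> sets \<nu>"
  proof -
    have "open {x::real. K < \<bar>x\<bar>}" by (intro open_Collect_less continuous_intros)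
    then have "{x::real. K < \<bar>x\<bar>} \<in> sets borel" by (rule borel_open)
    then show ?thesis using assms(1) by (simp add: P1_def)
  qed
  have ia: "integrable \<nu> (\<lambda>x. \<bar>x\<bar>)" using assms(1) by (simp add: P1_def)
  have "(\<integral>x. tailf r x \<partial>\<nu>) \<le> (\<integral>x. indicator {x. K < \<bar>x\<bar>} x *\<^sub>R \<bar>x\<bar> \<partial>\<nu>)"
  proof (rule integral_mono)
    show "integrable \<nu> (tailf r)" by (rule P1_int[OF assms(1) tail_lip])
    show "integrable \<nu> (\<lambda>x. indicator {x. K < \<bar>x\<bar>} x *\<^sub>R \<bar>x\<bar>)"
      by (rule integrable_mult_indicator[OF A ia])
    fix x :: real
    show "tailf r x \<le> indicator {x. K < \<bar>x\<bar>} x *\<^sub>R \<bar>x\<bar>"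
    proof (cases "K < \<bar>x\<bar>")
      case True then show ?thesis using assms(3) by (simp add: tailf_def)
    next
      case False then show ?thesis using assms(2) by (simp add: tailf_def)
    qed
  qed
  then show ?thesis by (simp add: set_lebesgue_integral_def)
qed

theorem lemma7:
  fixes M :: "'a measure"
    and L :: "nat \<Rightarrow> 'a \<Rightarrow> real measure"
    and LL :: "nat \<Rightarrow> real measure"
  assumes "prob_space M"
    and "\<And>n. L n \<in> M \<rightarrow>\<^sub>M prob_algebra borel"
    and "\<And>n \<omega>. \<omega> \<in> space M \<Longrightarrow> P1 (L n \<omega>)"
    and "\<And>n. P1 (LL n)"
    and "unif_integrable LL"
    and "\<And>f :: real \<Rightarrow> real. 1-lipschitz_on UNIV f \<Longrightarrow>
           conv_in_prob_zero M (\<lambda>n \<omega>. \<bar>(\<integral>x. f x \<partial>(L n \<omega>)) - (\<integral>x. f x \<partial>(LL n))\<bar>)"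
  shows "conv_in_prob_zero M (\<lambda>n \<omega>. W1 (L n \<omega>) (LL n))"
proof -
  note M = assms(1)
  define Y where "Y = (\<lambda>(g::real \<Rightarrow> real) n \<omega>. \<bar>(\<integral>x. g x \<partial>(L n \<omega>)) - (\<integral>x. g x \<partial>(LL n))\<bar>)"
  have Ycip: "conv_in_prob_zero M (Y g)" if "1-lipschitz_on UNIV g" for g
    unfolding Y_def using assms(6)[OF that] by simp
  have Ym: "Y g n \<in> borel_measurable M" if "1-lipschitz_on UNIV g" for g n
    using Ycip[OF that] by (simp add: conv_in_prob_zero_def)
  have Wm: "(\<lambda>\<omega>. W1 (L n \<omega>) (LL n)) \<in> borel_measurable M" for n
  proof -
    have "(\<lambda>\<omega>. SUP g\<in>Dall. Y g n \<omega>) \<in> borel_measurable M"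
    proof (rule borel_measurable_cSUP[OF Dall_countable])
      show "Y g n \<in> borel_measurable M" if "g \<in> Dall" for g by (rule Ym[OF Dall_lip[OF that]])
      show "bdd_above ((\<lambda>g. Y g n \<omega>) ` Dall)" if "\<omega> \<in> space M" for \<omega>
        using Dall_bdd[OF assms(3)[OF that] assms(4)] by (simp add: Y_def)
    qed
    moreover have "W1 (L n \<omega>) (LL n) = (SUP g\<in>Dall. Y g n \<omega>)" if "\<omega> \<in> space M" for \<omega>
      using W1_eq[OF assms(3)[OF that] assms(4)] by (simp add: Y_def)
    ultimately show ?thesis using measurable_cong by (metis (no_types, lifting))
  qed
  show ?thesis
    unfolding conv_in_prob_zero_def
  proof (intro conjI allI impI)
    show "(\<lambda>\<omega>. W1 (L n \<omega>) (LL n)) \<in> borel_measurable M" for n by (rule Wm)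
    fix e :: real assume e: "0 < e"
    have e8: "0 < e / 8" using e by simp
    obtain K where K: "\<And>n. (LINT x:{x. K < \<bar>x\<bar>}|LL n. \<bar>x\<bar>) \<le> e / 8"
      using assms(5) e8 unfolding unif_integrable_def by blast
    define m where "m = nat \<lceil>max K (24 / e)\<rceil> + 1"
    have m0: "m > 0" by (simp add: m_def)
    have mK: "K \<le> real m" unfolding m_def by linarith
    have me: "24 / e \<le> real m" unfolding m_def by linarith
    have m6: "6 / real m \<le> e / 4"
    proof -
      have "24 \<le> real m * e" using me e by (simp add: pos_divide_le_eq)
      then show ?thesis using m0 by (simp add: pos_divide_le_eq mult.commute)
    qed
    define h where "h = tailf (real m)"
    have hl: "1-lipschitz_on UNIV h" unfolding h_def by (rule tail_lip)
    define Z where "Z = (\<lambda>n \<omega>. (\<Sum>g\<in>Dset m. Y g n \<omega>) + Y h n \<omega>)"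
    have Zc: "conv_in_prob_zero M Z"
      unfolding Z_def
      by (rule cip_add[OF M cip_sum[OF M Dset_finite Ycip[OF Dset_lip[OF m0]]] Ycip[OF hl]])
    have bound: "\<bar>W1 (L n \<omega>) (LL n)\<bar> \<le> \<bar>Z n \<omega>\<bar> + e / 2" if "\<omega> \<in> space M" for n \<omega>
    proof -
      have P: "P1 (L n \<omega>)" by (rule assms(3)[OF that])
      have Q: "P1 (LL n)" by (rule assms(4))
      have w0: "0 \<le> W1 (L n \<omega>) (LL n)" by (rule W1_nonneg[OF P Q])
      have "W1 (L n \<omega>) (LL n) \<le> (\<Sum>g\<in>Dset m. Y g n \<omega>) + 6 / real m
          + (\<integral>x. h x \<partial>(L n \<omega>)) + (\<integral>x. h x \<partial>(LL n))"
        using W1_le_grid[OF P Q m0] by (simp add: Y_def h_def)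
      moreover have "(\<integral>x. h x \<partial>(L n \<omega>)) \<le> Y h n \<omega> + (\<integral>x. h x \<partial>(LL n))"
        by (simp add: Y_def)
      moreover have "(\<integral>x. h x \<partial>(LL n)) \<le> e / 8"
        using tail_UI[OF Q mK] K[of n] by (simp add: h_def)
      moreover have "Z n \<omega> \<le> \<bar>Z n \<omega>\<bar>" by simp
      ultimately show ?thesis using w0 m6 unfolding Z_def by linarith
    qed
    show "(\<lambda>n. measure M {\<omega> \<in> space M. e < \<bar>W1 (L n \<omega>) (LL n)\<bar>}) \<longlonglongrightarrow> 0"
      by (rule cip_le[OF M Zc Wm e bound])
  qed
qed


end
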